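(* Let $H=(Q,\pi,f_0,f_1)$ satisfy Assumptions A1 and A2 (see context). Then for each $\lambda\in(0,1)$, $$\mathrm{mTDR}_H(\varphi_{\lambda,H})=\sup\{\mathrm{mTDR}_H(\psi):\mathrm{mFDR}_H(\psi)\le\mathrm{mFDR}_H(\varphi_{\lambda,H})\},$$ the supremum being over all multiple testing procedures $\psi$ (measurable maps $X\mapsto\psi(X)\in\{0,1\}^N$).
   Context: Two-state HMM: $\mu$ Lebesgue on $\mathbb R$ or counting on $\mathbb Z$; under $\Pi_H$, $\theta=(\theta_n)_{n\le N}$ is a Markov chain on $\{0,1\}$ (initial law $\pi$, transition $Q$) and given $\theta$ the $X_n$ are independent with $\mu$-densities $f_{\theta_n}$; $E_H$ denotes expectation. Assumption A1: (i) some $\nu>0$ has $\max_jE_{X\sim f_j}|X|^\nu<\infty$; (ii) some $x^*\in\mathbb R\cup\{\pm\infty\}$ has $f_1/f_0\to\infty$ as $x\uparrow x^*$ or as $x\downarrow x^*$ (conventions $1/0=\infty,0/0=0$). Assumption A2: $Q$ has distinct rows, $\min_{ij}Q_{ij}>0$, $\pi$ invariant for $Q$. $\ell_i=\Pi_H(\theta_i=0\mid X)$, $\varphi_{\lambda,H}=(\mathbb 1\{\ell_i<\lambda\})_{i\le N}$. $\mathrm{mTDR}_H(\varphi)=\frac{E_H\#\{i:\theta_i=1,\varphi_i=1\}}{E_H\#\{i:\theta_i=1\}}$, $\mathrm{mFDR}_H(\varphi)=\frac{E_H\#\{i:\theta_i=0,\varphi_i=1\}}{E_H\#\{i:\varphi_i=1\}}$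 with the convention $0/0=0$. *)

theory Defs
  imports "HOL-Analysis.Analysis"
begin

definition ZZ_count :: "real measure" where
  "ZZ_count = distr (count_space (UNIV::int set)) borel real_of_int"

definition base_measure :: "bool \<Rightarrow> real measure" where
  "base_measure disc = (if disc then ZZ_count else lborel)"

definition base_support :: "bool \<Rightarrow> real set" where
  "base_support disc = (if disc then \<int> else UNIV)"

definition obs_space :: "bool \<Rightarrow> nat \<Rightarrow> (nat \<Rightarrow> real) measure" where
  "obs_space disc N = PiM {..<N} (\<lambda>_. base_measure disc)"

definition states :: "nat \<Rightarrow> (nat \<Rightarrow> nat) set" where
  "states N = PiE {..<N} (\<lambda>_. {0,1})"

definition prior_w :: "(nat \<Rightarrow> real) \<Rightarrow> (nat \<Rightarrow> nat \<Rightarrow> real) \<Rightarrow> nat \<Rightarrow> (nat \<Rightarrow> nat) \<Rightarrow> real" where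
  "prior_w p Q N t = (if N = 0 then 1 else p (t 0) * (\<Prod>n\<in>{1..<N}. Q (t (n - 1)) (t n)))"

text \<open>Joint density of (theta, X) w.r.t. (counting on {0,1}^N) x mu^N.\<close>
definition joint_dens :: "(nat \<Rightarrow> real) \<Rightarrow> (nat \<Rightarrow> nat \<Rightarrow> real) \<Rightarrow> (nat \<Rightarrow> real \<Rightarrow> real)
    \<Rightarrow> nat \<Rightarrow> (nat \<Rightarrow> nat) \<Rightarrow> (nat \<Rightarrow> real) \<Rightarrow> real" where
  "joint_dens p Q f N t x = prior_w p Q N t * (\<Prod>n<N. f (t n) (x n))"

definition EH :: "bool \<Rightarrow> (nat \<Rightarrow> real) \<Rightarrow> (nat \<Rightarrow> nat \<Rightarrow> real) \<Rightarrow> (nat \<Rightarrow> real \<Rightarrow> real)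
    \<Rightarrow> nat \<Rightarrow> ((nat \<Rightarrow> nat) \<Rightarrow> (nat \<Rightarrow> real) \<Rightarrow> real) \<Rightarrow> real" where
  "EH disc p Q f N g =
     (\<Sum>t\<in>states N. LINT x|obs_space disc N. g t x * joint_dens p Q f N t x)"

definition post0 :: "(nat \<Rightarrow> real) \<Rightarrow> (nat \<Rightarrow> nat \<Rightarrow> real) \<Rightarrow> (nat \<Rightarrow> real \<Rightarrow> real)
    \<Rightarrow> nat \<Rightarrow> nat \<Rightarrow> (nat \<Rightarrow> real) \<Rightarrow> real" where
  "post0 p Q f N i x =
     (\<Sum>t\<in>{t\<in>states N. t i = 0}. joint_dens p Q f N t x) / (\<Sum>t\<in>states N. joint_dens p Q f N t x)"

definition phi_proc :: "(nat \<Rightarrow> real) \<Rightarrow> (nat \<Rightarrow> nat \<Rightarrow> real) \<Rightarrow> (nat \<Rightarrow> real \<Rightarrow> real)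
    \<Rightarrow> nat \<Rightarrow> real \<Rightarrow> (nat \<Rightarrow> real) \<Rightarrow> nat \<Rightarrow> bool" where
  "phi_proc p Q f N lam x i = (post0 p Q f N i x < lam)"

text \<open>Multiple testing procedure: measurable map x |-> psi(x) in {0,1}^N
  (psi x i = True means psi_i(x) = 1).\<close>
definition is_MTP :: "bool \<Rightarrow> nat \<Rightarrow> ((nat \<Rightarrow> real) \<Rightarrow> nat \<Rightarrow> bool) \<Rightarrow> bool" where
  "is_MTP disc N psi \<longleftrightarrow>
     (\<forall>i<N. (\<lambda>x. psi x i) \<in> obs_space disc N \<rightarrow>\<^sub>M count_space UNIV)"

text \<open>Marginal true discovery rate and marginal false discovery rate (x/0 = 0 in Isabelle).\<close>
definition mTDR :: "bool \<Rightarrow> (nat \<Rightarrow> real) \<Rightarrow> (nat \<Rightarrow> nat \<Rightarrow> real) \<Rightarrow> (nat \<Rightarrow> real \<Rightarrow> real)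
    \<Rightarrow> nat \<Rightarrow> ((nat \<Rightarrow> real) \<Rightarrow> nat \<Rightarrow> bool) \<Rightarrow> real" where
  "mTDR disc p Q f N psi =
     EH disc p Q f N (\<lambda>t x. real (card {i\<in>{..<N}. t i = 1 \<and> psi x i}))
     / EH disc p Q f N (\<lambda>t x. real (card {i\<in>{..<N}. t i = 1}))"

definition mFDR :: "bool \<Rightarrow> (nat \<Rightarrow> real) \<Rightarrow> (nat \<Rightarrow> nat \<Rightarrow> real) \<Rightarrow> (nat \<Rightarrow> real \<Rightarrow> real)
    \<Rightarrow> nat \<Rightarrow> ((nat \<Rightarrow> real) \<Rightarrow> nat \<Rightarrow> bool) \<Rightarrow> real" where
  "mFDR disc p Q f N psi =
     EH disc p Q f N (\<lambda>t x. real (card {i\<in>{..<N}. t i = 0 \<and> psi x i}))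
     / EH disc p Q f N (\<lambda>t x. real (card {i\<in>{..<N}. psi x i}))"

definition densities :: "bool \<Rightarrow> (nat \<Rightarrow> real \<Rightarrow> real) \<Rightarrow> bool" where
  "densities disc f \<longleftrightarrow>
     (\<forall>j\<in>{0,1}. f j \<in> borel_measurable borel \<and> (\<forall>x. 0 \<le> f j x)
        \<and> (\<integral>\<^sup>+x. ennreal (f j x) \<partial>base_measure disc) = 1)"

definition lr :: "(nat \<Rightarrow> real \<Rightarrow> real) \<Rightarrow> real \<Rightarrow> ereal" where
  "lr f x = (if f 0 x = 0 then (if f 1 x = 0 then 0 else \<infinity>) else ereal (f 1 x / f 0 x))"

text \<open>A1 (ii): f_1/f_0 tends to infinity as x increases to or decreases to some
  x* in R or {+-infinity}, x ranging over the support of mu (R or Z);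
  the filter is required to be proper so the limit is meaningful.\<close>
definition assm_A1 :: "bool \<Rightarrow> (nat \<Rightarrow> real \<Rightarrow> real) \<Rightarrow> bool" where
  "assm_A1 disc f \<longleftrightarrow>
     (\<exists>\<nu>>0. \<forall>j\<in>{0,1}. (\<integral>\<^sup>+x. ennreal (\<bar>x\<bar> powr \<nu> * f j x) \<partial>base_measure disc) < \<infinity>)
   \<and> (\<exists>F\<in>{at_top, at_bot} \<union> {at_left c | c. True} \<union> {at_right c | c. True}.
        inf F (principal (base_support disc)) \<noteq> bot
        \<and> (lr f \<longlongrightarrow> \<infinity>) (inf F (principal (base_support disc))))"

definition assm_A2 :: "(nat \<Rightarrow> real) \<Rightarrow> (nat \<Rightarrow> nat \<Rightarrow> real) \<Rightarrow> bool" where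
  "assm_A2 p Q \<longleftrightarrow>
     (\<forall>i\<in>{0,1}. \<forall>j\<in>{0,1}. 0 < Q i j)
   \<and> (\<forall>i\<in>{0,1}. Q i 0 + Q i 1 = 1)
   \<and> (\<exists>j\<in>{0,1}. Q 0 j \<noteq> Q 1 j)
   \<and> (\<forall>i\<in>{0,1}. 0 \<le> p i) \<and> p 0 + p 1 = 1
   \<and> (\<forall>j\<in>{0,1}. p j = p 0 * Q 0 j + p 1 * Q 1 j)"

end

theory Submission
  imports Defs
begin


lemma sets_base[simp]: "sets (base_measure disc) = sets borel"
  by (simp add: base_measure_def ZZ_count_def)

lemma space_base[simp]: "space (base_measure disc) = UNIV"
  by (simp add: base_measure_def ZZ_count_def)

lemma sf_ZZ: "sigma_finite_measure ZZ_count"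
proof (rule sigma_finite_measure.intro, rule exI[of _ "insert (UNIV - \<int>) (range (\<lambda>k::int. {real_of_int k}))"], intro conjI)
  show "countable (insert (UNIV - \<int>) (range (\<lambda>k::int. {real_of_int k})))" by simp
  show "insert (UNIV - \<int>) (range (\<lambda>k::int. {real_of_int k})) \<subseteq> sets ZZ_count"
    using closed_Ints[where 'a=real] borel_closed by (auto simp: ZZ_count_def Ints_def)
  show "\<Union> (insert (UNIV - \<int>) (range (\<lambda>k::int. {real_of_int k}))) = space ZZ_count"
    by (auto simp: ZZ_count_def Ints_def)
  show "\<forall>a\<in>insert (UNIV - \<int>) (range (\<lambda>k::int. {real_of_int k})). emeasure ZZ_count a \<noteq> \<infinity>"
  proof
    fix a assume a: "a \<in> insert (UNIV - \<int>) (range (\<lambda>k::int. {real_of_int k}))"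
    have m: "real_of_int \<in> count_space UNIV \<rightarrow>\<^sub>M borel" by simp
    show "emeasure ZZ_count a \<noteq> \<infinity>"
    proof (cases "a = UNIV - \<int>")
      case True
      have "real_of_int -` a \<inter> space (count_space UNIV) = {}" using True by (auto simp: Ints_def)
      moreover have "a \<in> sets borel" using True closed_Ints[where 'a=real] borel_closed by auto
      ultimately show ?thesis unfolding ZZ_count_def using emeasure_distr[OF m] by simp
    next
      case False
      then obtain k where k: "a = {real_of_int k}" using a by auto
      have "real_of_int -` a \<inter> space (count_space UNIV) = {k}" using k by auto
      moreover have "a \<in> sets borel" using k by auto
      ultimately show ?thesis unfolding ZZ_count_def using emeasure_distr[OF m] by simp
    qed
  qed
qed

lemma sf_base: "sigma_finite_measure (base_measure disc)"
  using sf_ZZ by (simp add: base_measure_def lborel.sigma_finite_measure_axioms)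

lemma psf: "product_sigma_finite (\<lambda>_::nat. base_measure disc)"
  unfolding product_sigma_finite_def using sf_base by simp

lemma dens_int:
  assumes "densities disc f" "j \<in> {0,1}"
  shows "integrable (base_measure disc) (f j)"
proof -
  have m: "f j \<in> borel_measurable borel" and nn: "\<And>x. 0 \<le> f j x"
    and i: "(\<integral>\<^sup>+x. ennreal (f j x) \<partial>base_measure disc) = 1"
    using assms unfolding densities_def by auto
  have m': "f j \<in> borel_measurable (base_measure disc)"
    using m by (simp add: measurable_cong_sets[OF sets_base refl])
  show ?thesis
    using i nn m' by (intro integrableI_nonneg) auto
qed

lemma states_01: "t \<in> states N \<Longrightarrow> n < N \<Longrightarrow> t n \<in> {0,1}"
  unfolding states_def by (auto simp: PiE_def Pi_def)

lemma finite_states[simp]: "finite (states N)"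
  unfolding states_def by (intro finite_PiE) auto

lemma prior_nonneg:
  assumes "assm_A2 p Q" "t \<in> states N"
  shows "0 \<le> prior_w p Q N t"
proof -
  have Q: "\<And>i j. i \<in> {0,1} \<Longrightarrow> j \<in> {0,1} \<Longrightarrow> 0 \<le> Q i j" and pp: "\<And>i. i \<in> {0,1} \<Longrightarrow> 0 \<le> p i"
    using assms(1) unfolding assm_A2_def by (auto simp: less_imp_le)
  show ?thesis
  proof (cases "N = 0")
    case True then show ?thesis by (simp add: prior_w_def)
  next
    case False
    have "0 \<le> p (t 0)" using pp states_01[OF assms(2), of 0] False by auto
    moreover have "0 \<le> (\<Prod>n\<in>{1..<N}. Q (t (n - 1)) (t n))"
      by (intro prod_nonneg) (auto intro!: Q states_01[OF assms(2)])
    ultimately show ?thesis using False by (simp add: prior_w_def)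
  qed
qed

lemma J_nonneg:
  assumes "densities disc f" "assm_A2 p Q" "t \<in> states N"
  shows "0 \<le> joint_dens p Q f N t x"
proof -
  have "\<And>n. n < N \<Longrightarrow> 0 \<le> f (t n) (x n)"
    using assms(1) states_01[OF assms(3)] unfolding densities_def by blast
  then show ?thesis unfolding joint_dens_def
    by (intro mult_nonneg_nonneg prior_nonneg[OF assms(2,3)] prod_nonneg) auto
qed

lemma f_meas:
  assumes "densities disc f" "t \<in> states N" "n < N"
  shows "(\<lambda>x. f (t n) (x n)) \<in> borel_measurable (obs_space disc N)"
proof -
  have m: "f (t n) \<in> borel_measurable borel"
    using assms(1) states_01[OF assms(2,3)] unfolding densities_def by blast
  have "(\<lambda>x. x n) \<in> obs_space disc N \<rightarrow>\<^sub>M base_measure disc"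
    unfolding obs_space_def using assms(3) by (intro measurable_component_singleton) auto
  then have "(\<lambda>x. x n) \<in> obs_space disc N \<rightarrow>\<^sub>M borel"
    by (simp add: measurable_cong_sets[OF refl sets_base])
  then show ?thesis using m by (rule measurable_compose)
qed

lemma J_meas:
  assumes "densities disc f" "t \<in> states N"
  shows "joint_dens p Q f N t \<in> borel_measurable (obs_space disc N)"
  unfolding joint_dens_def
  by (intro borel_measurable_times borel_measurable_const borel_measurable_prod f_meas[OF assms]) auto

lemma J_int:
  assumes "densities disc f" "t \<in> states N"
  shows "integrable (obs_space disc N) (joint_dens p Q f N t)"
proof -
  interpret product_sigma_finite "\<lambda>_::nat. base_measure disc" by (rule psf)
  have "integrable (PiM {..<N} (\<lambda>_. base_measure disc)) (\<lambda>x. \<Prod>n\<in>{..<N}. f (t n) (x n))"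
    by (intro product_integrable_prod) (auto intro!: dens_int[OF assms(1)] states_01[OF assms(2)])
  then show ?thesis unfolding joint_dens_def obs_space_def by auto
qed

lemma int_if:
  fixes g :: "_ \<Rightarrow> real"
  assumes "integrable M g" "Measurable.pred M R"
  shows "integrable M (\<lambda>x. if R x then g x else 0)"
proof -
  have [measurable]: "Measurable.pred M R" by fact
  have [measurable]: "g \<in> borel_measurable M" using assms(1) by auto
  show ?thesis by (rule Bochner_Integration.integrable_bound[OF assms(1)]) auto
qed

definition W :: "(nat \<Rightarrow> real) \<Rightarrow> (nat \<Rightarrow> nat \<Rightarrow> real) \<Rightarrow> (nat \<Rightarrow> real \<Rightarrow> real)
    \<Rightarrow> nat \<Rightarrow> ((nat \<Rightarrow> nat) \<Rightarrow> nat \<Rightarrow> bool) \<Rightarrow> nat \<Rightarrow> (nat \<Rightarrow> real) \<Rightarrow> real" where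
  "W p Q f N P i x = (\<Sum>t\<in>{t\<in>states N. P t i}. joint_dens p Q f N t x)"

lemma card_sum: fixes N :: nat shows "real (card {i\<in>{..<N}. R i}) = (\<Sum>i<N. if R i then 1 else 0)"
proof -
  have "(\<Sum>i<N. if R i then 1 else 0) = (\<Sum>i\<in>{i\<in>{..<N}. R i}. (1::real))"
    by (subst sum.inter_filter) auto
  then show ?thesis by simp
qed

lemma EH_card:
  assumes "densities disc f" and psi: "\<And>i. i < N \<Longrightarrow> Measurable.pred (obs_space disc N) (\<lambda>x. psi x i)"
  shows "EH disc p Q f N (\<lambda>t x. real (card {i\<in>{..<N}. P t i \<and> psi x i}))
       = (\<Sum>i<N. \<integral>x. (if psi x i then W p Q f N P i x else 0) \<partial>obs_space disc N)"
proof -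
  let ?M = "obs_space disc N"
  let ?J = "joint_dens p Q f N"
  let ?h = "\<lambda>t i x. if P t i \<and> psi x i then ?J t x else 0"
  have hi: "integrable ?M (?h t i)" if "t \<in> states N" "i < N" for t i
  proof (cases "P t i")
    case True
    then show ?thesis using int_if[OF J_int[OF assms(1) that(1)] psi[OF that(2)]] by simp
  next
    case False then show ?thesis by simp
  qed
  have "EH disc p Q f N (\<lambda>t x. real (card {i\<in>{..<N}. P t i \<and> psi x i}))
      = (\<Sum>t\<in>states N. \<integral>x. (\<Sum>i<N. ?h t i x) \<partial>?M)"
    unfolding EH_def card_sum
    by (intro sum.cong refl Bochner_Integration.integral_cong) (auto simp: sum_distrib_right intro!: sum.cong)
  also have "\<dots> = (\<Sum>t\<in>states N. \<Sum>i<N. \<integral>x. ?h t i x \<partial>?M)"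
  proof (rule sum.cong[OF refl])
    fix t assume t: "t \<in> states N"
    show "(\<integral>x. (\<Sum>i<N. ?h t i x) \<partial>?M) = (\<Sum>i<N. \<integral>x. ?h t i x \<partial>?M)"
      by (rule Bochner_Integration.integral_sum) (rule hi[OF t], auto)
  qed
  also have "\<dots> = (\<Sum>i<N. \<Sum>t\<in>states N. \<integral>x. ?h t i x \<partial>?M)"
    by (rule sum.swap)
  also have "\<dots> = (\<Sum>i<N. \<integral>x. (\<Sum>t\<in>states N. ?h t i x) \<partial>?M)"
  proof (rule sum.cong[OF refl])
    fix i assume i: "i \<in> {..<N}"
    show "(\<Sum>t\<in>states N. \<integral>x. ?h t i x \<partial>?M) = (\<integral>x. (\<Sum>t\<in>states N. ?h t i x) \<partial>?M)"
      by (rule Bochner_Integration.integral_sum[symmetric]) (rule hi, use i in auto)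
  qed
  also have "\<dots> = (\<Sum>i<N. \<integral>x. (if psi x i then W p Q f N P i x else 0) \<partial>?M)"
    unfolding W_def
    by (intro sum.cong refl Bochner_Integration.integral_cong) (auto simp: sum.inter_filter[symmetric])
  finally show ?thesis .
qed

lemma W_meas:
  assumes "densities disc f"
  shows "W p Q f N P i \<in> borel_measurable (obs_space disc N)"
  unfolding W_def by (intro borel_measurable_sum J_meas[OF assms]) auto

lemma W_int:
  assumes "densities disc f"
  shows "integrable (obs_space disc N) (W p Q f N P i)"
  unfolding W_def by (rule Bochner_Integration.integrable_sum) (rule J_int[OF assms], auto)

lemma W_nonneg:
  assumes "densities disc f" "assm_A2 p Q"
  shows "0 \<le> W p Q f N P i x"
  unfolding W_def by (intro sum_nonneg J_nonneg[OF assms]) auto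

lemma W_split:
  assumes "i < N"
  shows "W p Q f N (\<lambda>t i. True) i x = W p Q f N (\<lambda>t i. t i = 0) i x + W p Q f N (\<lambda>t i. t i = 1) i x"
proof -
  have "{t\<in>states N. True} = {t\<in>states N. t i = 0} \<union> {t\<in>states N. t i = 1}"
    using states_01[OF _ assms] by auto
  then show ?thesis unfolding W_def
    by (simp only:) (rule sum.union_disjoint, auto)
qed

lemma post0_W: "post0 p Q f N i x = W p Q f N (\<lambda>t i. t i = 0) i x / W p Q f N (\<lambda>t i. True) i x"
  unfolding post0_def W_def by simp

definition Iw :: "bool \<Rightarrow> nat \<Rightarrow> ((nat \<Rightarrow> real) \<Rightarrow> nat \<Rightarrow> bool) \<Rightarrow> (nat \<Rightarrow> (nat \<Rightarrow> real) \<Rightarrow> real) \<Rightarrow> real" where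
  "Iw disc N psi g = (\<Sum>i<N. \<integral>x. (if psi x i then g i x else 0) \<partial>obs_space disc N)"

lemma Iw_lin:
  assumes "\<And>i. i < N \<Longrightarrow> integrable (obs_space disc N) (g i)"
    and "\<And>i. i < N \<Longrightarrow> integrable (obs_space disc N) (h i)"
    and "\<And>i. i < N \<Longrightarrow> Measurable.pred (obs_space disc N) (\<lambda>x. psi x i)"
  shows "Iw disc N psi (\<lambda>i x. u * g i x + v * h i x) = u * Iw disc N psi g + v * Iw disc N psi h"
proof -
  have "\<And>i. i < N \<Longrightarrow> (\<integral>x. (if psi x i then u * g i x + v * h i x else 0) \<partial>obs_space disc N)
     = u * (\<integral>x. (if psi x i then g i x else 0) \<partial>obs_space disc N) + v * (\<integral>x. (if psi x i then h i x else 0) \<partial>obs_space disc N)"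
  proof -
    fix i assume i: "i < N"
    have ig: "integrable (obs_space disc N) (\<lambda>x. if psi x i then g i x else 0)"
      by (rule int_if[OF assms(1)[OF i] assms(3)[OF i]])
    have ih: "integrable (obs_space disc N) (\<lambda>x. if psi x i then h i x else 0)"
      by (rule int_if[OF assms(2)[OF i] assms(3)[OF i]])
    have "(\<integral>x. (if psi x i then u * g i x + v * h i x else 0) \<partial>obs_space disc N)
      = (\<integral>x. u * (if psi x i then g i x else 0) + v * (if psi x i then h i x else 0) \<partial>obs_space disc N)"
      by (intro Bochner_Integration.integral_cong) auto
    also have "\<dots> = (\<integral>x. u * (if psi x i then g i x else 0) \<partial>obs_space disc N) + (\<integral>x. v * (if psi x i then h i x else 0) \<partial>obs_space disc N)"
      using ig ih by (intro Bochner_Integration.integral_add) auto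
    also have "\<dots> = u * (\<integral>x. (if psi x i then g i x else 0) \<partial>obs_space disc N) + v * (\<integral>x. (if psi x i then h i x else 0) \<partial>obs_space disc N)"
      by simp
    finally show "?thesis i" .
  qed
  then show ?thesis unfolding Iw_def
    by (simp add: sum.distrib sum_distrib_left)
qed

context
  fixes disc :: bool and N :: nat and p :: "nat \<Rightarrow> real" and Q :: "nat \<Rightarrow> nat \<Rightarrow> real"
    and f :: "nat \<Rightarrow> real \<Rightarrow> real" and lam :: real
  assumes dens: "densities disc f" and A2: "assm_A2 p Q" and lam0: "0 < lam" and lam1: "lam < 1"
begin

abbreviation "Wa \<equiv> W p Q f N (\<lambda>t i. t i = 0)"
abbreviation "Wb \<equiv> W p Q f N (\<lambda>t i. t i = 1)"
abbreviation "Wt \<equiv> W p Q f N (\<lambda>t i. True)"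
abbreviation "phi \<equiv> phi_proc p Q f N lam"

lemma phi_pred: "i < N \<Longrightarrow> Measurable.pred (obs_space disc N) (\<lambda>x. phi x i)"
proof -
  have [measurable]: "Wa i \<in> borel_measurable (obs_space disc N)" "Wt i \<in> borel_measurable (obs_space disc N)"
    by (rule W_meas[OF dens])+
  show ?thesis unfolding phi_proc_def post0_W by measurable
qed

lemma key_pw:
  assumes "i < N"
  shows "(if psi x i then lam * Wb i x + (lam - 1) * Wa i x else 0)
     \<le> (if phi x i then lam * Wb i x + (lam - 1) * Wa i x else 0)"
proof -
  have a: "0 \<le> Wa i x" and b: "0 \<le> Wb i x" by (rule W_nonneg[OF dens A2])+
  have t: "Wt i x = Wa i x + Wb i x" by (rule W_split[OF assms])
  show ?thesis
  proof (cases "Wa i x + Wb i x = 0")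
    case True
    then have "Wa i x = 0" "Wb i x = 0" using a b by auto
    then show ?thesis by simp
  next
    case False
    then have pos: "0 < Wa i x + Wb i x" using a b by auto
    have "phi x i \<longleftrightarrow> Wa i x < lam * (Wa i x + Wb i x)"
      unfolding phi_proc_def post0_W t using pos by (simp add: divide_less_eq)
    then show ?thesis by (auto simp: algebra_simps)
  qed
qed

lemma phi_c_nonneg:
  assumes "i < N"
  shows "0 \<le> (if phi x i then lam * Wb i x + (lam - 1) * Wa i x else 0)"
  using key_pw[OF assms, of "\<lambda>_ _. False"] by simp

lemma phi_c_pos:
  assumes "i < N" "phi x i" "0 < Wt i x"
  shows "0 < lam * Wb i x + (lam - 1) * Wa i x"
proof -
  have t: "Wt i x = Wa i x + Wb i x" by (rule W_split[OF assms(1)])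
  have "Wa i x < lam * (Wa i x + Wb i x)"
    using assms(2,3) unfolding phi_proc_def post0_W t by (simp add: divide_less_eq)
  then show ?thesis by (simp add: algebra_simps)
qed

lemma Iw_c_le:
  assumes psi: "\<And>i. i < N \<Longrightarrow> Measurable.pred (obs_space disc N) (\<lambda>x. psi x i)"
  shows "Iw disc N psi (\<lambda>i x. lam * Wb i x + (lam - 1) * Wa i x) \<le> Iw disc N phi (\<lambda>i x. lam * Wb i x + (lam - 1) * Wa i x)"
  unfolding Iw_def
proof (rule sum_mono)
  fix i assume i: "i \<in> {..<N}"
  have ic: "integrable (obs_space disc N) (\<lambda>x. lam * Wb i x + (lam - 1) * Wa i x)"
    using W_int[OF dens] by auto
  show "(\<integral>x. (if psi x i then lam * Wb i x + (lam - 1) * Wa i x else 0) \<partial>obs_space disc N)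
     \<le> (\<integral>x. (if phi x i then lam * Wb i x + (lam - 1) * Wa i x else 0) \<partial>obs_space disc N)"
  proof (rule integral_mono)
    show "integrable (obs_space disc N) (\<lambda>x. if psi x i then lam * Wb i x + (lam - 1) * Wa i x else 0)"
      using int_if[OF ic psi[of i]] i by simp
    show "integrable (obs_space disc N) (\<lambda>x. if phi x i then lam * Wb i x + (lam - 1) * Wa i x else 0)"
      using int_if[OF ic phi_pred[of i]] i by simp
  qed (use key_pw i in auto)
qed

lemma Iw_c:
  assumes psi: "\<And>i. i < N \<Longrightarrow> Measurable.pred (obs_space disc N) (\<lambda>x. psi x i)"
  shows "Iw disc N psi (\<lambda>i x. lam * Wb i x + (lam - 1) * Wa i x) = lam * Iw disc N psi Wb + (lam - 1) * Iw disc N psi Wa"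
  by (rule Iw_lin[OF W_int[OF dens] W_int[OF dens] psi])

lemma Iw_t:
  assumes psi: "\<And>i. i < N \<Longrightarrow> Measurable.pred (obs_space disc N) (\<lambda>x. psi x i)"
  shows "Iw disc N psi Wt = Iw disc N psi Wa + Iw disc N psi Wb"
proof -
  have "Iw disc N psi Wt = Iw disc N psi (\<lambda>i x. 1 * Wa i x + 1 * Wb i x)"
    unfolding Iw_def by (intro sum.cong refl Bochner_Integration.integral_cong) (auto simp: W_split)
  also have "\<dots> = Iw disc N psi Wa + Iw disc N psi Wb"
    using Iw_lin[OF W_int[OF dens] W_int[OF dens] psi, where u=1 and v=1] by simp
  finally show ?thesis .
qed

lemma Iw_nonneg: "0 \<le> Iw disc N psi (W p Q f N P)"
  unfolding Iw_def using W_nonneg[OF dens A2]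
  by (intro sum_nonneg integral_nonneg_AE AE_I2) auto

lemma strict:
  assumes "0 < Iw disc N phi Wt"
  shows "0 < Iw disc N phi (\<lambda>i x. lam * Wb i x + (lam - 1) * Wa i x)"
proof (rule ccontr)
  let ?M = "obs_space disc N"
  let ?g = "\<lambda>i x. if phi x i then lam * Wb i x + (lam - 1) * Wa i x else 0"
  assume "\<not> ?thesis"
  moreover have nn: "\<And>i. i < N \<Longrightarrow> 0 \<le> integral\<^sup>L ?M (?g i)"
    by (intro integral_nonneg_AE AE_I2 phi_c_nonneg)
  ultimately have "(\<Sum>i<N. integral\<^sup>L ?M (?g i)) = 0"
    unfolding Iw_def by (metis (no_types, lifting) lessThan_iff linorder_not_less order_antisym sum_nonneg)
  then have z: "\<And>i. i < N \<Longrightarrow> integral\<^sup>L ?M (?g i) = 0"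
    using nn by (subst (asm) sum_nonneg_eq_0_iff) auto
  have "\<And>i. i < N \<Longrightarrow> (\<integral>x. (if phi x i then Wt i x else 0) \<partial>?M) = 0"
  proof -
    fix i assume i: "i < N"
    have ic: "integrable ?M (\<lambda>x. lam * Wb i x + (lam - 1) * Wa i x)"
      using W_int[OF dens] by auto
    have "AE x in ?M. ?g i x = 0"
      using z[OF i] integral_nonneg_eq_0_iff_AE[OF int_if[OF ic phi_pred[OF i]]] phi_c_nonneg[OF i] by auto
    then have "AE x in ?M. (if phi x i then Wt i x else 0) = 0"
    proof (rule AE_mp, intro AE_I2 impI)
      fix x assume g0: "?g i x = 0"
      show "(if phi x i then Wt i x else 0) = 0"
      proof (rule ccontr)
        assume ne: "(if phi x i then Wt i x else 0) \<noteq> 0"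
        then have ph: "phi x i" by (auto split: if_splits)
        have "0 \<le> Wt i x" by (rule W_nonneg[OF dens A2])
        then have "0 < Wt i x" using ne ph by auto
        then show False using phi_c_pos[OF i ph] g0 ph by simp
      qed
    qed
    then show "(\<integral>x. (if phi x i then Wt i x else 0) \<partial>?M) = 0"
      by (simp add: integral_eq_zero_AE)
  qed
  then have "Iw disc N phi Wt = 0" unfolding Iw_def by simp
  with assms show False by simp
qed

end


lemma arith_key:
  fixes a b a' b' l :: real
  assumes "0 \<le> a" "0 \<le> b" "0 \<le> a'" "0 \<le> b'" "0 < l" "l < 1"
    and lag: "l * b' + (l - 1) * a' \<le> l * b + (l - 1) * a"
    and str: "0 < a + b \<Longrightarrow> 0 < l * b + (l - 1) * a"
    and c: "a' / (a' + b') \<le> a / (a + b)"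
  shows "b' \<le> b"
proof (cases "a' + b' = 0")
  case True then show ?thesis using assms by auto
next
  case F1: False
  then have p': "0 < a' + b'" using assms by auto
  show ?thesis
  proof (cases "a + b = 0")
    case True
    then have "a = 0" "b = 0" using assms by auto
    then have "a' = 0" using c p' assms(3) by (simp add: divide_le_0_iff)
    then show ?thesis using lag \<open>a = 0\<close> \<open>b = 0\<close> assms by (simp add: mult_le_0_iff)
  next
    case False
    then have p: "0 < a + b" using assms by auto
    have c2: "a' * (a + b) \<le> a * (a' + b')" using c p p' by (simp add: divide_simps)
    have s: "0 < l * b + (l - 1) * a" using str p .
    have c3: "a' * b \<le> a * b'" using c2 by (simp add: algebra_simps)
    have "b * (l * b' + (l - 1) * a') \<le> b * (l * b + (l - 1) * a)"
      using lag assms(2) by (rule mult_left_mono)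
    moreover have "(1 - l) * (a' * b) \<le> (1 - l) * (a * b')"
      using c3 assms(6) by (intro mult_left_mono) auto
    ultimately have "b' * (l * b + (l - 1) * a) \<le> b * (l * b + (l - 1) * a)"
      by (simp add: algebra_simps)
    then show ?thesis using s by simp
  qed
qed

theorem lemma21:
  fixes disc :: bool and N :: nat and p :: "nat \<Rightarrow> real" and Q :: "nat \<Rightarrow> nat \<Rightarrow> real"
    and f :: "nat \<Rightarrow> real \<Rightarrow> real" and lam :: real
  assumes "densities disc f"
    and "assm_A1 disc f"
    and "assm_A2 p Q"
    and "0 < lam" and "lam < 1"
  shows "mTDR disc p Q f N (phi_proc p Q f N lam) =
         Sup {mTDR disc p Q f N psi | psi. is_MTP disc N psi \<and>
                mFDR disc p Q f N psi \<le> mFDR disc p Q f N (phi_proc p Q f N lam)}"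
proof -
  note dens = assms(1) and A2 = assms(3) and l0 = assms(4) and l1 = assms(5)
  let ?phi = "phi_proc p Q f N lam"
  let ?Wa = "W p Q f N (\<lambda>t i. t i = 0)"
  let ?Wb = "W p Q f N (\<lambda>t i. t i = 1)"
  let ?Wt = "W p Q f N (\<lambda>t i. True)"
  have phip: "\<And>i. i < N \<Longrightarrow> Measurable.pred (obs_space disc N) (\<lambda>x. ?phi x i)"
    by (rule phi_pred[OF dens A2 l0 l1])
  have tru: "\<And>i. i < N \<Longrightarrow> Measurable.pred (obs_space disc N) (\<lambda>x. True)" by simp
  have T: "EH disc p Q f N (\<lambda>t x. real (card {i\<in>{..<N}. t i = 1}))
      = Iw disc N (\<lambda>x i. True) ?Wb"
    using EH_card[OF dens tru, where P="\<lambda>t i. t i = 1"] unfolding Iw_def by simp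
  have T0: "0 \<le> Iw disc N (\<lambda>x i. True) ?Wb" by (rule Iw_nonneg[OF dens A2 l0 l1])
  have FDR: "mFDR disc p Q f N psi = Iw disc N psi ?Wa / (Iw disc N psi ?Wa + Iw disc N psi ?Wb)"
    if psi: "\<And>i. i < N \<Longrightarrow> Measurable.pred (obs_space disc N) (\<lambda>x. psi x i)" for psi
  proof -
    have 1: "EH disc p Q f N (\<lambda>t x. real (card {i\<in>{..<N}. t i = 0 \<and> psi x i})) = Iw disc N psi ?Wa"
      using EH_card[OF dens psi, where P="\<lambda>t i. t i = 0"] unfolding Iw_def by simp
    have 2: "EH disc p Q f N (\<lambda>t x. real (card {i\<in>{..<N}. psi x i})) = Iw disc N psi ?Wt"
      using EH_card[OF dens psi, where P="\<lambda>t i. True"] unfolding Iw_def by simp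
    show ?thesis unfolding mFDR_def 1 2 using Iw_t[OF dens A2 l0 l1 psi] by simp
  qed
  have TDR: "mTDR disc p Q f N psi = Iw disc N psi ?Wb / Iw disc N (\<lambda>x i. True) ?Wb"
    if psi: "\<And>i. i < N \<Longrightarrow> Measurable.pred (obs_space disc N) (\<lambda>x. psi x i)" for psi
  proof -
    have 1: "EH disc p Q f N (\<lambda>t x. real (card {i\<in>{..<N}. t i = 1 \<and> psi x i})) = Iw disc N psi ?Wb"
      using EH_card[OF dens psi, where P="\<lambda>t i. t i = 1"] unfolding Iw_def by simp
    show ?thesis unfolding mTDR_def 1 T ..
  qed
  have le: "mTDR disc p Q f N psi \<le> mTDR disc p Q f N ?phi"
    if psi: "\<And>i. i < N \<Longrightarrow> Measurable.pred (obs_space disc N) (\<lambda>x. psi x i)"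
      and c: "mFDR disc p Q f N psi \<le> mFDR disc p Q f N ?phi" for psi
  proof -
    have "Iw disc N psi ?Wb \<le> Iw disc N ?phi ?Wb"
    proof (rule arith_key[where l=lam])
      show "0 \<le> Iw disc N ?phi ?Wa" "0 \<le> Iw disc N ?phi ?Wb" "0 \<le> Iw disc N psi ?Wa" "0 \<le> Iw disc N psi ?Wb"
        by (rule Iw_nonneg[OF dens A2 l0 l1])+
      show "0 < lam" "lam < 1" by fact+
      show "lam * Iw disc N psi ?Wb + (lam - 1) * Iw disc N psi ?Wa \<le> lam * Iw disc N ?phi ?Wb + (lam - 1) * Iw disc N ?phi ?Wa"
      proof -
        have e2: "Iw disc N ?phi (\<lambda>i x. lam * ?Wb i x + (lam - 1) * ?Wa i x) = lam * Iw disc N ?phi ?Wb + (lam - 1) * Iw disc N ?phi ?Wa"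
          by (rule Iw_c[OF dens A2 l0 l1, where psi="?phi"]) (rule phip)
        show ?thesis using Iw_c_le[OF dens A2 l0 l1 psi] Iw_c[OF dens A2 l0 l1 psi] e2 by simp
      qed
      show "0 < lam * Iw disc N ?phi ?Wb + (lam - 1) * Iw disc N ?phi ?Wa"
        if "0 < Iw disc N ?phi ?Wa + Iw disc N ?phi ?Wb"
      proof -
        have e1: "Iw disc N ?phi ?Wt = Iw disc N ?phi ?Wa + Iw disc N ?phi ?Wb"
          by (rule Iw_t[OF dens A2 l0 l1, where psi="?phi"]) (rule phip)
        have e2: "Iw disc N ?phi (\<lambda>i x. lam * ?Wb i x + (lam - 1) * ?Wa i x) = lam * Iw disc N ?phi ?Wb + (lam - 1) * Iw disc N ?phi ?Wa"
          by (rule Iw_c[OF dens A2 l0 l1, where psi="?phi"]) (rule phip)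
        show ?thesis using strict[OF dens A2 l0 l1, of N] that e1 e2 by simp
      qed
      show "Iw disc N psi ?Wa / (Iw disc N psi ?Wa + Iw disc N psi ?Wb) \<le> Iw disc N ?phi ?Wa / (Iw disc N ?phi ?Wa + Iw disc N ?phi ?Wb)"
        using c FDR[OF psi] FDR[where psi="?phi", OF phip] by simp
    qed
    then have "Iw disc N psi ?Wb / Iw disc N (\<lambda>x i. True) ?Wb \<le> Iw disc N ?phi ?Wb / Iw disc N (\<lambda>x i. True) ?Wb"
      using T0 by (rule divide_right_mono)
    then show ?thesis using TDR[OF psi] TDR[where psi="?phi", OF phip] by simp
  qed
  show ?thesis
  proof (rule cSup_eq_maximum[symmetric])
    show "mTDR disc p Q f N ?phi \<in> {mTDR disc p Q f N psi | psi. is_MTP disc N psi \<and>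
                mFDR disc p Q f N psi \<le> mFDR disc p Q f N ?phi}"
      using phip unfolding is_MTP_def by blast
  next
    fix y assume "y \<in> {mTDR disc p Q f N psi | psi. is_MTP disc N psi \<and>
                mFDR disc p Q f N psi \<le> mFDR disc p Q f N ?phi}"
    then obtain psi where y: "y = mTDR disc p Q f N psi" and m: "is_MTP disc N psi"
      and c: "mFDR disc p Q f N psi \<le> mFDR disc p Q f N ?phi" by blast
    have "\<And>i. i < N \<Longrightarrow> Measurable.pred (obs_space disc N) (\<lambda>x. psi x i)"
      using m unfolding is_MTP_def by blast
    then show "y \<le> mTDR disc p Q f N ?phi" using le c y by blast
  qed
qed

end
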